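(* Let $G=(V,E,p)$ be an influence graph. For every partial realization $\psi$ under full-adoption feedback, $$\sigma(\Gamma(\psi))\le|\Gamma(\psi)|+\sigma(\partial(\psi)).$$ Moreover, if $G$ is an in-arborescence, then $$\sigma(\Gamma(\psi))\le|\Gamma(\psi)|+\mathrm{OPT}_N(G,|{\rm dom}(\psi)|).$$
   Context: IC model: each edge $(u,v)$ has probability $p_{uv}\in[0,1]$; a realization (live-edge graph) $\phi$ contains each edge independently with probability $p_{uv}$, with distribution $\mathcal{P}$. $\Gamma(S,\phi)$ is the set of nodes reachable from $S$ in $\phi$; $\sigma(S)=\mathbb{E}_{\Phi\sim\mathcal{P}}|\Gamma(S,\Phi)|$; $\mathrm{OPT}_N(G,k)=\max_{S\subseteq V,|S|\le k}\sigma(S)$. Full-adoption feedback: selecting $u$ as a seed reveals the status of all out-going edges of every node reachable from $u$ in $\phi$. A partial realization $\psi$ records the seeds selected so far (the set ${\rm dom}(\psi)$) with their feedback; $\Gamma(\psi)$ is the set of nodes reachable from ${\rm dom}(\psi)$ through live edges (determined by $\psi$). The boundary $\partial(\psi)$ is a subset of $\Gamma(\psi)$ of minimum cardinality such that $G$ has no directed edge from $\Gamma(\psi)\setminus\partial(\psi)$ to $V\setminus\Gamma(\psi)$ (ties broken arbitrarily). An in-arborescence is an influence graph whose underlying graph is a directed tree with a root $r$ such that for every node $v$ the unique path between $v$ and $r$ is directed from $v$ to $r$. *)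

theory Defs
  imports Complex_Main
begin

definition influence_graph :: "'a set \<Rightarrow> ('a \<times> 'a) set \<Rightarrow> ('a \<times> 'a \<Rightarrow> real) \<Rightarrow> bool" where
  "influence_graph V E p \<longleftrightarrow> finite V \<and> E \<subseteq> V \<times> V \<and> (\<forall>e\<in>E. 0 \<le> p e \<and> p e \<le> 1)"

definition real_prob :: "('a \<times> 'a) set \<Rightarrow> ('a \<times> 'a \<Rightarrow> real) \<Rightarrow> ('a \<times> 'a) set \<Rightarrow> real" where
  "real_prob E p phi = (\<Prod>e\<in>phi. p e) * (\<Prod>e\<in>E - phi. 1 - p e)"

definition reach :: "'a set \<Rightarrow> ('a \<times> 'a) set \<Rightarrow> 'a set" where
  "reach S phi = (phi\<^sup>*) `` S"

definition sigma :: "('a \<times> 'a) set \<Rightarrow> ('a \<times> 'a \<Rightarrow> real) \<Rightarrow> 'a set \<Rightarrow> real" where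
  "sigma E p S = (\<Sum>phi\<in>Pow E. real_prob E p phi * real (card (reach S phi)))"

definition OPT_N :: "'a set \<Rightarrow> ('a \<times> 'a) set \<Rightarrow> ('a \<times> 'a \<Rightarrow> real) \<Rightarrow> nat \<Rightarrow> real" where
  "OPT_N V E p k = Max {sigma E p S | S. S \<subseteq> V \<and> card S \<le> k}"

text \<open>Partial realization under full-adoption feedback: a pair (S, L) of the seed set
  dom(psi) = S and the set L of observed live edges; it must be consistent with some full
  realization phi, where all out-going edges of every node reachable from S are observed.\<close>
definition partial_realization ::
  "'a set \<Rightarrow> ('a \<times> 'a) set \<Rightarrow> 'a set \<times> ('a \<times> 'a) set \<Rightarrow> bool" where
  "partial_realization V E psi \<longleftrightarrow>
     (\<exists>phi\<subseteq>E. fst psi \<subseteq> V \<and>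
        snd psi = phi \<inter> {(u, v) \<in> E. u \<in> reach (fst psi) phi})"

definition pdom :: "'a set \<times> ('a \<times> 'a) set \<Rightarrow> 'a set" where
  "pdom psi = fst psi"

definition Gamma_psi :: "'a set \<times> ('a \<times> 'a) set \<Rightarrow> 'a set" where
  "Gamma_psi psi = reach (fst psi) (snd psi)"

definition boundary_cond :: "'a set \<Rightarrow> ('a \<times> 'a) set \<Rightarrow> 'a set \<Rightarrow> 'a set \<Rightarrow> bool" where
  "boundary_cond V E Gam B \<longleftrightarrow> B \<subseteq> Gam \<and>
     (\<forall>(u, v)\<in>E. \<not> (u \<in> Gam - B \<and> v \<in> V - Gam))"

definition is_boundary ::
  "'a set \<Rightarrow> ('a \<times> 'a) set \<Rightarrow> 'a set \<times> ('a \<times> 'a) set \<Rightarrow> 'a set \<Rightarrow> bool" where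
  "is_boundary V E psi B \<longleftrightarrow> boundary_cond V E (Gamma_psi psi) B \<and>
     (\<forall>B'. boundary_cond V E (Gamma_psi psi) B' \<longrightarrow> card B \<le> card B')"

text \<open>In-arborescence with root r: the underlying undirected graph is a tree (simple,
  connected, |V| - 1 edges) and for every node v the unique path between v and r is
  directed from v to r, i.e. r is reachable from v along directed edges.\<close>
definition in_arborescence :: "'a set \<Rightarrow> ('a \<times> 'a) set \<Rightarrow> 'a \<Rightarrow> bool" where
  "in_arborescence V E r \<longleftrightarrow>
     r \<in> V \<and>
     (\<forall>(u, v)\<in>E. u \<noteq> v \<and> (v, u) \<notin> E) \<and>
     (\<forall>u\<in>V. \<forall>v\<in>V. (u, v) \<in> (E \<union> E\<inverse>)\<^sup>*) \<and>
     card {{u, v} | u v. (u, v) \<in> E} = card V - 1 \<and>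
     (\<forall>v\<in>V. (v, r) \<in> E\<^sup>*)"

end

theory Submission
  imports Defs
begin

lemma reach_sub: "reach X phi \<subseteq> X \<union> snd ` phi"
proof
  fix w assume "w \<in> reach X phi"
  then obtain s where s: "s \<in> X" "(s, w) \<in> phi\<^sup>*" unfolding reach_def by blast
  from s(2) show "w \<in> X \<union> snd ` phi"
    by (cases rule: rtranclE) (use s(1) in force)+
qed

lemma finite_reach:
  assumes "finite X" "finite phi" shows "finite (reach X phi)"
  using reach_sub[of X phi] assms by (meson finite_Un finite_imageI finite_subset)

lemma sum_prob:
  assumes "finite E"
  shows "(\<Sum>phi\<in>Pow E. real_prob E p phi) = 1"
proof -
  have "(\<Prod>x\<in>E. p x + (1 - p x)) = (\<Sum>X\<in>Pow E. (\<Prod>x\<in>X. p x) * (\<Prod>x\<in>E-X. 1 - p x))"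
    by (rule prod_add[OF assms])
  then show ?thesis unfolding real_prob_def by simp
qed

lemma prob_nonneg:
  assumes "\<forall>e\<in>E. 0 \<le> p e \<and> p e \<le> 1" "phi \<subseteq> E"
  shows "0 \<le> real_prob E p phi"
  unfolding real_prob_def using assms
  by (intro mult_nonneg_nonneg prod_nonneg) auto

lemma reach_split:
  assumes EV: "E \<subseteq> V \<times> V" and phi: "phi \<subseteq> E"
    and bc: "boundary_cond V E Gam B"
  shows "reach Gam phi \<subseteq> Gam \<union> reach B phi"
proof
  fix w assume "w \<in> reach Gam phi"
  then obtain u where u: "u \<in> Gam" "(u, w) \<in> phi\<^sup>*" unfolding reach_def by blast
  from u(2) show "w \<in> Gam \<union> reach B phi"
  proof (induction rule: rtrancl_induct)
    case base then show ?case using u(1) by simp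
  next
    case (step x y)
    show ?case
    proof (cases "y \<in> Gam")
      case True then show ?thesis by simp
    next
      case False
      have yV: "y \<in> V" and xy: "(x, y) \<in> E" using step(2) phi EV by auto
      show ?thesis
      proof (cases "x \<in> reach B phi")
        case True
        then obtain b where "b \<in> B" "(b, x) \<in> phi\<^sup>*" unfolding reach_def by blast
        then have "(b, y) \<in> phi\<^sup>*" using step(2) by auto
        then show ?thesis using \<open>b \<in> B\<close> unfolding reach_def by blast
      next
        case False
        then have "x \<in> Gam" using step(3) by simp
        then have "x \<in> B" using bc xy yV \<open>y \<notin> Gam\<close> unfolding boundary_cond_def by blast
        then show ?thesis using step(2) unfolding reach_def by blast
      qed
    qed
  qed
qed

lemma part1:
  assumes G: "influence_graph V E p" and fin: "finite Gam"
    and bc: "boundary_cond V E Gam B"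
  shows "sigma E p Gam \<le> real (card Gam) + sigma E p B"
proof -
  have EV: "E \<subseteq> V \<times> V" and fV: "finite V" and pr: "\<forall>e\<in>E. 0 \<le> p e \<and> p e \<le> 1"
    using G unfolding influence_graph_def by auto
  have fE: "finite E" using EV fV by (meson finite_SigmaI finite_subset)
  have BG: "B \<subseteq> Gam" using bc unfolding boundary_cond_def by auto
  have le: "real (card (reach Gam phi)) \<le> real (card Gam) + real (card (reach B phi))"
    if "phi \<in> Pow E" for phi
  proof -
    have fp: "finite phi" using that fE by (meson PowD finite_subset)
    have fB: "finite B" using BG fin by (rule finite_subset)
    have "card (reach Gam phi) \<le> card (Gam \<union> reach B phi)"
      using reach_split[OF EV _ bc, of phi] that fin finite_reach[OF fB fp]
      by (intro card_mono) auto
    also have "\<dots> \<le> card Gam + card (reach B phi)" by (rule card_Un_le)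
    finally show ?thesis by linarith
  qed
  have "sigma E p Gam \<le> (\<Sum>phi\<in>Pow E. real_prob E p phi * (real (card Gam) + real (card (reach B phi))))"
    unfolding sigma_def
    by (intro sum_mono mult_left_mono le prob_nonneg[OF pr]) auto
  also have "\<dots> = real (card Gam) * (\<Sum>phi\<in>Pow E. real_prob E p phi) + sigma E p B"
    unfolding sigma_def by (simp add: algebra_simps sum.distrib sum_distrib_left)
  also have "\<dots> = real (card Gam) + sigma E p B" using sum_prob[OF fE] by simp
  finally show ?thesis .
qed

lemma outdeg:
  assumes fV: "finite V" and EV: "E \<subseteq> V \<times> V" and arb: "in_arborescence V E r"
    and va: "(v, a) \<in> E" and vb: "(v, b) \<in> E"
  shows "a = b"
proof (rule ccontr)
  assume ab: "a \<noteq> b"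
  have rV: "r \<in> V" and nl: "\<forall>(u, v)\<in>E. u \<noteq> v \<and> (v, u) \<notin> E"
    and cU: "card {{u, v} | u v. (u, v) \<in> E} = card V - 1"
    and reach: "\<forall>v\<in>V. (v, r) \<in> E\<^sup>*"
    using arb unfolding in_arborescence_def by auto
  have fE: "finite E" using EV fV by (meson finite_SigmaI finite_subset)
  have U: "{{u, v} | u v. (u, v) \<in> E} = (\<lambda>(u, v). {u, v}) ` E" by auto
  have inj: "inj_on (\<lambda>(u, v). {u, v}) E"
  proof (rule inj_onI)
    fix x y assume x: "x \<in> E" and y: "y \<in> E" and eq: "(case x of (u, v) \<Rightarrow> {u, v}) = (case y of (u, v) \<Rightarrow> {u, v})"
    obtain x1 x2 where xx: "x = (x1, x2)" by force
    obtain y1 y2 where yy: "y = (y1, y2)" by force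
    have "{x1, x2} = {y1, y2}" using eq xx yy by simp
    then have "(x1 = y1 \<and> x2 = y2) \<or> (x1 = y2 \<and> x2 = y1)" by (auto simp: doubleton_eq_iff)
    then show "x = y" using nl x y xx yy by auto
  qed
  have cE: "card E = card V - 1" using cU U card_image[OF inj] by simp
  define g where "g = (\<lambda>w. (w, SOME y. (w, y) \<in> E))"
  have gE: "g w \<in> E" if wV: "w \<in> V - {r}" for w
  proof -
    have "(w, r) \<in> E\<^sup>*" using reach wV by auto
    moreover have "w \<noteq> r" using wV by simp
    ultimately have "(w, r) \<in> E\<^sup>+" by (simp add: rtrancl_eq_or_trancl)
    then obtain y where "(w, y) \<in> E" using tranclD by metis
    then show ?thesis unfolding g_def by (metis someI_ex)
  qed
  have ginj: "inj_on g (V - {r})" unfolding g_def by (rule inj_onI) simp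
  have gim: "x = g (fst x) \<and> fst x \<in> V - {r}" if "x \<in> g ` (V - {r})" for x
    using that unfolding g_def by auto
  obtain e where e: "e \<in> {(v, a), (v, b)}" "e \<notin> g ` (V - {r})"
  proof (cases "v = r")
    case True
    have "(v, a) \<notin> g ` (V - {r})" using gim[of "(v, a)"] True by auto
    then show ?thesis using that[of "(v, a)"] by blast
  next
    case False
    show ?thesis
    proof (cases "g v = (v, a)")
      case True
      have "(v, b) \<notin> g ` (V - {r})"
      proof
        assume "(v, b) \<in> g ` (V - {r})"
        then have "(v, b) = g v" using gim[of "(v, b)"] by simp
        then show False using True ab by simp
      qed
      then show ?thesis using that[of "(v, b)"] by blast
    next
      case False
      have "(v, a) \<notin> g ` (V - {r})"
      proof
        assume "(v, a) \<in> g ` (V - {r})"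
        then have "(v, a) = g v" using gim[of "(v, a)"] by simp
        then show False using False by simp
      qed
      then show ?thesis using that[of "(v, a)"] by blast
    qed
  qed
  have sub: "insert e (g ` (V - {r})) \<subseteq> E" using gE e va vb by auto
  have "card (insert e (g ` (V - {r}))) = Suc (card (V - {r}))"
    using e(2) card_image[OF ginj] fV by simp
  also have "\<dots> = card V" using card_Suc_Diff1[OF fV rV] by simp
  finally have "card V \<le> card E" using card_mono[OF fE sub] by simp
  moreover have "card V > 0" using rV fV by (auto simp: card_gt_0_iff)
  ultimately show False using cE by simp
qed

theorem lemma4:
  fixes V :: "'a set" and E :: "('a \<times> 'a) set" and p :: "'a \<times> 'a \<Rightarrow> real"
    and psi :: "'a set \<times> ('a \<times> 'a) set"
  assumes G: "influence_graph V E p"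
    and psi: "partial_realization V E psi"
  shows "(\<forall>B. is_boundary V E psi B \<longrightarrow>
            sigma E p (Gamma_psi psi) \<le> real (card (Gamma_psi psi)) + sigma E p B)
       \<and> (\<forall>r. in_arborescence V E r \<longrightarrow>
            sigma E p (Gamma_psi psi) \<le> real (card (Gamma_psi psi)) + OPT_N V E p (card (pdom psi)))"
proof -
  have EV: "E \<subseteq> V \<times> V" and fV: "finite V"
    using G unfolding influence_graph_def by auto
  define S where "S = fst psi"
  define R where "R = snd psi"
  have SV: "S \<subseteq> V" and RE: "R \<subseteq> E" using psi unfolding partial_realization_def S_def R_def by auto
  have Gdef: "Gamma_psi psi = reach S R" unfolding Gamma_psi_def S_def R_def by simp
  have GV: "reach S R \<subseteq> V" proof -
    have "snd ` R \<subseteq> V" using RE EV by auto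
    then show ?thesis using reach_sub[of S R] SV by blast
  qed
  have fG: "finite (Gamma_psi psi)" using GV fV Gdef finite_subset by metis
  have P1: "\<forall>B. is_boundary V E psi B \<longrightarrow>
            sigma E p (Gamma_psi psi) \<le> real (card (Gamma_psi psi)) + sigma E p B"
    using part1[OF G fG] unfolding is_boundary_def by blast
  have P2: "sigma E p (Gamma_psi psi) \<le> real (card (Gamma_psi psi)) + OPT_N V E p (card (pdom psi))"
    if arb: "in_arborescence V E r" for r
  proof -
    have od: "\<And>v a b. (v, a) \<in> E \<Longrightarrow> (v, b) \<in> E \<Longrightarrow> a = b"
      using outdeg[OF fV EV arb] by blast
    have sv: "single_valued R" unfolding single_valued_def using od RE by blast
    define Gam where "Gam = reach S R"
    define B where "B = {x \<in> Gam. \<exists>y. (x, y) \<in> E \<and> y \<notin> Gam}"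
    have bc: "boundary_cond V E Gam B" unfolding boundary_cond_def B_def by blast
    have trm: "\<forall>z. (x, z) \<notin> R" if "x \<in> B" for x
    proof (intro allI notI)
      fix z assume xz: "(x, z) \<in> R"
      obtain y where y: "x \<in> Gam" "(x, y) \<in> E" "y \<notin> Gam" using \<open>x \<in> B\<close> unfolding B_def by blast
      have "z = y" using od[OF _ y(2)] xz RE by blast
      moreover have "z \<in> Gam" using y(1) xz unfolding Gam_def reach_def
        by (meson ImageE ImageI rtrancl.rtrancl_into_rtrancl)
      ultimately show False using y(3) by simp
    qed
    have src: "\<exists>s\<in>S. (s, x) \<in> R\<^sup>*" if "x \<in> B" for x
      using that unfolding B_def Gam_def reach_def by blast
    define f where "f = (\<lambda>x. SOME s. s \<in> S \<and> (s, x) \<in> R\<^sup>*)"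
    have f: "f x \<in> S \<and> (f x, x) \<in> R\<^sup>*" if "x \<in> B" for x
      using src[OF that] unfolding f_def by (metis (mono_tags, lifting) someI_ex)
    have finj: "inj_on f B"
    proof (rule inj_onI)
      fix x y assume x: "x \<in> B" and y: "y \<in> B" and eq: "f x = f y"
      have "(f x, x) \<in> R\<^sup>*" "(f x, y) \<in> R\<^sup>*" using f[OF x] f[OF y] eq by auto
      then have "(x, y) \<in> R\<^sup>* \<or> (y, x) \<in> R\<^sup>*" by (rule single_valued_confluent[OF sv])
      then show "x = y"
        using trm[OF x] trm[OF y] by (auto elim: converse_rtranclE)
    qed
    have fS: "finite S" using SV fV finite_subset by blast
    have cB: "card B \<le> card S" using card_inj_on_le[OF finj _ fS] f by blast
    have BV: "B \<subseteq> V" using GV unfolding B_def Gam_def by blast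
    have "sigma E p B \<le> OPT_N V E p (card (pdom psi))"
      unfolding OPT_N_def
    proof (rule Max_ge)
      have "{sigma E p S | S. S \<subseteq> V \<and> card S \<le> card (pdom psi)} \<subseteq> sigma E p ` Pow V" by auto
      then show "finite {sigma E p S | S. S \<subseteq> V \<and> card S \<le> card (pdom psi)}"
        using fV by (meson finite_Pow_iff finite_imageI finite_subset)
      show "sigma E p B \<in> {sigma E p S | S. S \<subseteq> V \<and> card S \<le> card (pdom psi)}"
        using BV cB unfolding pdom_def S_def by blast
    qed
    moreover have "sigma E p (Gamma_psi psi) \<le> real (card (Gamma_psi psi)) + sigma E p B"
      using part1[OF G fG, of B] bc Gdef Gam_def by simp
    ultimately show ?thesis by linarith
  qed
  show ?thesis using P1 P2 by blast
qed

end
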